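(* Let $R$ be a commutative Artinian ring, $M$ a non-zero $R$-module, $N$ and $L$ incomparable PS-hollow submodules of $M$, and $H\subseteq Ass^h(M)$. Then $N+L$ is $H$-PS-hollow if and only if $N$ and $L$ are both $H$-PS-hollow.
   Context: An $R$-submodule $N\leq M$ is PS-hollow iff for every ideal $I\leq R$ and every submodule $L\leq M$: $N\subseteq IM+L$ implies $N\subseteq IM$ or $N\subseteq L$. For a PS-hollow $N\leq M$ put $A_N=\{I\leq R: N\subseteq IM\}$ and let $H_N$ be the set of minimal elements of $A_N$ w.r.t. inclusion. For a set $H$ of ideals, $N$ is $H$-PS-hollow iff $N$ is PS-hollow and $H_N=H$. $Ass^h(M)$ (the associated hollow ideals of $M$) is the set of ideals $I$ with $I\in H_N$ for some PS-hollow submodule $N\leq M$. *)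

theory Defs
  imports "HOL-Algebra.Module" "HOL-Algebra.Ideal"
begin

definition artinian_ring :: "('a, 'c) ring_scheme \<Rightarrow> bool" where
  "artinian_ring R \<longleftrightarrow> cring R \<and>
     (\<forall>f :: nat \<Rightarrow> 'a set. (\<forall>i. ideal (f i) R) \<and> (\<forall>i. f (Suc i) \<subseteq> f i)
        \<longrightarrow> (\<exists>n. \<forall>m\<ge>n. f m = f n))"

definition ideal_mult_module :: "('a, 'c) ring_scheme \<Rightarrow> ('a, 'b, 'd) module_scheme \<Rightarrow> 'a set \<Rightarrow> 'b set" where
  "ideal_mult_module R M I =
     \<Inter> {H. submodule H R M \<and> {a \<odot>\<^bsub>M\<^esub> x | a x. a \<in> I \<and> x \<in> carrier M} \<subseteq> H}"

definition mod_sum :: "('b, 'd) ring_scheme \<Rightarrow> 'b set \<Rightarrow> 'b set \<Rightarrow> 'b set" where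
  "mod_sum M N L = {n \<oplus>\<^bsub>M\<^esub> l | n l. n \<in> N \<and> l \<in> L}"

definition PS_hollow :: "('a, 'c) ring_scheme \<Rightarrow> ('a, 'b, 'd) module_scheme \<Rightarrow> 'b set \<Rightarrow> bool" where
  "PS_hollow R M N \<longleftrightarrow> submodule N R M \<and>
     (\<forall>I L. ideal I R \<longrightarrow> submodule L R M \<longrightarrow>
        N \<subseteq> mod_sum M (ideal_mult_module R M I) L \<longrightarrow>
        N \<subseteq> ideal_mult_module R M I \<or> N \<subseteq> L)"

definition A_set :: "('a, 'c) ring_scheme \<Rightarrow> ('a, 'b, 'd) module_scheme \<Rightarrow> 'b set \<Rightarrow> 'a set set" where
  "A_set R M N = {I. ideal I R \<and> N \<subseteq> ideal_mult_module R M I}"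

definition H_set :: "('a, 'c) ring_scheme \<Rightarrow> ('a, 'b, 'd) module_scheme \<Rightarrow> 'b set \<Rightarrow> 'a set set" where
  "H_set R M N = {I \<in> A_set R M N. \<forall>J \<in> A_set R M N. J \<subseteq> I \<longrightarrow> J = I}"

definition H_PS_hollow :: "('a, 'c) ring_scheme \<Rightarrow> ('a, 'b, 'd) module_scheme \<Rightarrow> 'a set set \<Rightarrow> 'b set \<Rightarrow> bool" where
  "H_PS_hollow R M H N \<longleftrightarrow> PS_hollow R M N \<and> H_set R M N = H"

definition Ass_h :: "('a, 'c) ring_scheme \<Rightarrow> ('a, 'b, 'd) module_scheme \<Rightarrow> 'a set set" where
  "Ass_h R M = {I. \<exists>N. PS_hollow R M N \<and> I \<in> H_set R M N}"

end

theory Submission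
  imports Defs
begin

lemma (in module) zero_in_sub:
  assumes L: "submodule L R M" shows "\<zero>\<^bsub>M\<^esub> \<in> L"
proof -
  obtain x where x: "x \<in> L" using submoduleE(2)[OF L] by blast
  have "x \<oplus>\<^bsub>M\<^esub> (\<ominus>\<^bsub>M\<^esub> x) \<in> L" using x submoduleE(3,5)[OF L] by blast
  then show ?thesis using x submoduleE(1)[OF L] by (simp add: subsetD M.r_neg)
qed

lemma (in module) mod_sum_submodule:
  assumes N: "submodule N R M" and L: "submodule L R M"
  shows "submodule (mod_sum M N L) R M"
proof -
  note EN = submoduleE[OF N] and EL = submoduleE[OF L]
  show ?thesis
  proof (rule submoduleI)
    show "mod_sum M N L \<subseteq> carrier M" using EN(1) EL(1) unfolding mod_sum_def by blast
    have "\<zero>\<^bsub>M\<^esub> = \<zero>\<^bsub>M\<^esub> \<oplus>\<^bsub>M\<^esub> \<zero>\<^bsub>M\<^esub>" by simp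
    then show "\<zero>\<^bsub>M\<^esub> \<in> mod_sum M N L" unfolding mod_sum_def
      using zero_in_sub[OF N] zero_in_sub[OF L] by blast
    fix a assume "a \<in> mod_sum M N L"
    then obtain n l where a: "a = n \<oplus>\<^bsub>M\<^esub> l" "n \<in> N" "l \<in> L" unfolding mod_sum_def by blast
    have "\<ominus>\<^bsub>M\<^esub> a = (\<ominus>\<^bsub>M\<^esub> n) \<oplus>\<^bsub>M\<^esub> (\<ominus>\<^bsub>M\<^esub> l)"
      using a EN(1) EL(1) by (simp add: M.minus_add subsetD)
    then show "\<ominus>\<^bsub>M\<^esub> a \<in> mod_sum M N L" unfolding mod_sum_def using a EN(3) EL(3) by blast
  next
    fix a b assume "a \<in> mod_sum M N L" "b \<in> mod_sum M N L"
    then obtain n l n' l' where a: "a = n \<oplus>\<^bsub>M\<^esub> l" "n \<in> N" "l \<in> L"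
      and b: "b = n' \<oplus>\<^bsub>M\<^esub> l'" "n' \<in> N" "l' \<in> L" unfolding mod_sum_def by blast
    have c: "n \<in> carrier M" "l \<in> carrier M" "n' \<in> carrier M" "l' \<in> carrier M"
      using a b EN(1) EL(1) by auto
    have "a \<oplus>\<^bsub>M\<^esub> b = (n \<oplus>\<^bsub>M\<^esub> n') \<oplus>\<^bsub>M\<^esub> (l \<oplus>\<^bsub>M\<^esub> l')"
      using a b c by (simp add: M.a_ac)
    then show "a \<oplus>\<^bsub>M\<^esub> b \<in> mod_sum M N L" unfolding mod_sum_def using a b EN(5) EL(5) by blast
  next
    fix r x assume r: "r \<in> carrier R" and "x \<in> mod_sum M N L"
    then obtain n l where a: "x = n \<oplus>\<^bsub>M\<^esub> l" "n \<in> N" "l \<in> L" unfolding mod_sum_def by blast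
    have "r \<odot>\<^bsub>M\<^esub> x = (r \<odot>\<^bsub>M\<^esub> n) \<oplus>\<^bsub>M\<^esub> (r \<odot>\<^bsub>M\<^esub> l)"
      using a r EN(1) EL(1) by (simp add: smult_r_distr subsetD)
    then show "r \<odot>\<^bsub>M\<^esub> x \<in> mod_sum M N L" unfolding mod_sum_def using a r EN(4) EL(4) by blast
  qed
qed

lemma (in module) sub_mod_sum1:
  assumes N: "submodule N R M" and L: "submodule L R M"
  shows "N \<subseteq> mod_sum M N L"
proof
  fix n assume n: "n \<in> N"
  then have "n = n \<oplus>\<^bsub>M\<^esub> \<zero>\<^bsub>M\<^esub>" using submoduleE(1)[OF N] by (simp add: subsetD)
  then show "n \<in> mod_sum M N L" unfolding mod_sum_def using n zero_in_sub[OF L] by blast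
qed

lemma (in module) sub_mod_sum2:
  assumes N: "submodule N R M" and L: "submodule L R M"
  shows "L \<subseteq> mod_sum M N L"
proof
  fix n assume n: "n \<in> L"
  then have "n = \<zero>\<^bsub>M\<^esub> \<oplus>\<^bsub>M\<^esub> n" using submoduleE(1)[OF L] by (simp add: subsetD)
  then show "n \<in> mod_sum M N L" unfolding mod_sum_def using n zero_in_sub[OF N] by blast
qed

lemma IM_add: "x \<in> ideal_mult_module R M I \<Longrightarrow> y \<in> ideal_mult_module R M I
   \<Longrightarrow> module R M \<Longrightarrow> x \<oplus>\<^bsub>M\<^esub> y \<in> ideal_mult_module R M I"
proof -
  assume a: "x \<in> ideal_mult_module R M I" "y \<in> ideal_mult_module R M I" "module R M"
  show ?thesis unfolding ideal_mult_module_def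
  proof (rule InterI)
    fix X assume X: "X \<in> {H. submodule H R M \<and> {a \<odot>\<^bsub>M\<^esub> x | a x. a \<in> I \<and> x \<in> carrier M} \<subseteq> H}"
    then have "x \<in> X" "y \<in> X" using a(1,2) unfolding ideal_mult_module_def by blast+
    then show "x \<oplus>\<^bsub>M\<^esub> y \<in> X" using module.submoduleE(5)[OF a(3)] X by blast
  qed
qed

lemma mod_sum_le: "N \<subseteq> X \<Longrightarrow> L \<subseteq> X \<Longrightarrow> (\<And>x y. x \<in> X \<Longrightarrow> y \<in> X \<Longrightarrow> x \<oplus>\<^bsub>M\<^esub> y \<in> X)
   \<Longrightarrow> mod_sum M N L \<subseteq> X"
  unfolding mod_sum_def by blast

lemma mod_sum_mono: "N \<subseteq> N' \<Longrightarrow> L \<subseteq> L' \<Longrightarrow> mod_sum M N L \<subseteq> mod_sum M N' L'"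
  unfolding mod_sum_def by blast

lemma IM_mono: "I \<subseteq> J \<Longrightarrow> ideal_mult_module R M I \<subseteq> ideal_mult_module R M J"
  unfolding ideal_mult_module_def by blast

lemma (in module) comm_helper: "x \<in> carrier M \<Longrightarrow> y \<in> carrier M \<Longrightarrow> x \<oplus>\<^bsub>M\<^esub> y = y \<oplus>\<^bsub>M\<^esub> x"
  by (rule M.a_comm)

lemma A_up: "J \<in> A_set R M N \<Longrightarrow> J \<subseteq> I \<Longrightarrow> ideal I R \<Longrightarrow> I \<in> A_set R M N"
proof -
  assume a: "J \<in> A_set R M N" "J \<subseteq> I" "ideal I R"
  have "N \<subseteq> ideal_mult_module R M J" using a(1) unfolding A_set_def by simp
  also have "\<dots> \<subseteq> ideal_mult_module R M I" using a(2) by (rule IM_mono)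
  finally show ?thesis using a(3) unfolding A_set_def by simp
qed

lemma A_min:
  assumes art: "artinian_ring R" and I: "I \<in> A_set R M N"
  shows "\<exists>J \<in> H_set R M N. J \<subseteq> I"
proof (rule ccontr)
  assume no: "\<not> ?thesis"
  define S where "S = {J \<in> A_set R M N. J \<subseteq> I}"
  have step: "\<exists>J'. J' \<in> S \<and> J' \<subset> J" if J: "J \<in> S" for J
  proof (rule ccontr)
    assume "\<not> ?thesis"
    then have nn: "\<And>K. K \<in> S \<Longrightarrow> \<not> K \<subset> J" by blast
    have JA: "J \<in> A_set R M N" and JI: "J \<subseteq> I" using J unfolding S_def by auto
    have "K = J" if "K \<in> A_set R M N" "K \<subseteq> J" for K
    proof -
      have "K \<in> S" unfolding S_def using that JI by auto
      then show ?thesis using nn[of K] that(2) by auto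
    qed
    then have "J \<in> H_set R M N" using JA unfolding H_set_def by auto
    then show False using no JI by auto
  qed
  define f where "f = rec_nat I (\<lambda>_ J. SOME J'. J' \<in> S \<and> J' \<subset> J)"
  have f0: "f 0 = I" and fS: "\<And>n. f (Suc n) = (SOME J'. J' \<in> S \<and> J' \<subset> f n)"
    unfolding f_def by simp_all
  have nxt: "f (Suc n) \<in> S \<and> f (Suc n) \<subset> f n" if "f n \<in> S" for n
  proof -
    have "\<exists>J'. J' \<in> S \<and> J' \<subset> f n" by (rule step) (rule that)
    then have "(SOME J'. J' \<in> S \<and> J' \<subset> f n) \<in> S \<and> (SOME J'. J' \<in> S \<and> J' \<subset> f n) \<subset> f n"
      by (rule someI_ex)
    then show ?thesis by (simp only: fS)
  qed
  have inS: "f n \<in> S" for n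
  proof (induction n)
    case 0
    have "I \<in> S" using I unfolding S_def by blast
    then show ?case by (simp only: f0)
  next
    case (Suc n)
    then show ?case using nxt by blast
  qed
  have fin: "f (Suc n) \<subset> f n" for n using nxt inS by blast
  have idl: "ideal (f i) R" for i using inS[of i] unfolding S_def A_set_def by simp
  have "\<forall>i. ideal (f i) R" using idl by blast
  moreover have "\<forall>i. f (Suc i) \<subseteq> f i" using fin by blast
  ultimately obtain n where "\<forall>m\<ge>n. f m = f n" using art unfolding artinian_ring_def by blast
  then have "f (Suc n) = f n" using le_SucI[OF order_refl, of n] by blast
  then show False using fin[of n] by auto
qed

lemma A_eq:
  assumes art: "artinian_ring R" and h: "H_set R M N = H_set R M L"
  shows "A_set R M N \<subseteq> A_set R M L"
proof
  fix I assume I: "I \<in> A_set R M N"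
  then obtain J where "J \<in> H_set R M N" "J \<subseteq> I" using A_min[OF art] by blast
  then have J: "J \<in> A_set R M L" "J \<subseteq> I" using h unfolding H_set_def by auto
  have "ideal I R" using I unfolding A_set_def by simp
  then show "I \<in> A_set R M L" using A_up[OF J] by simp
qed

theorem proposition5p5:
  fixes R :: "('a, 'c) ring_scheme" and M :: "('a, 'b, 'd) module_scheme"
    and N L :: "'b set" and H :: "'a set set"
  assumes "artinian_ring R"
    and "module R M"
    and "carrier M \<noteq> {\<zero>\<^bsub>M\<^esub>}"
    and "PS_hollow R M N" and "PS_hollow R M L"
    and "\<not> N \<subseteq> L" and "\<not> L \<subseteq> N"
    and "H \<subseteq> Ass_h R M"
  shows "H_PS_hollow R M H (mod_sum M N L) \<longleftrightarrow> H_PS_hollow R M H N \<and> H_PS_hollow R M H L"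
proof -
  note mod = assms(2)
  have sN: "submodule N R M" and sL: "submodule L R M" using assms(4,5) unfolding PS_hollow_def by blast+
  have N1: "N \<subseteq> mod_sum M N L" using module.sub_mod_sum1[OF mod sN sL] .
  have L1: "L \<subseteq> mod_sum M N L" using module.sub_mod_sum2[OF mod sN sL] .
  have sNL: "submodule (mod_sum M N L) R M" using module.mod_sum_submodule[OF mod sN sL] .
  have Asum: "A_set R M (mod_sum M N L) = A_set R M N \<inter> A_set R M L"
  proof
    show "A_set R M (mod_sum M N L) \<subseteq> A_set R M N \<inter> A_set R M L"
      using N1 L1 unfolding A_set_def by blast
    show "A_set R M N \<inter> A_set R M L \<subseteq> A_set R M (mod_sum M N L)"
    proof
      fix I assume "I \<in> A_set R M N \<inter> A_set R M L"
      then have "ideal I R" "N \<subseteq> ideal_mult_module R M I" "L \<subseteq> ideal_mult_module R M I"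
        unfolding A_set_def by blast+
      moreover have "mod_sum M N L \<subseteq> ideal_mult_module R M I"
        by (rule mod_sum_le) (use calculation IM_add[OF _ _ mod] in auto)
      ultimately show "I \<in> A_set R M (mod_sum M N L)" unfolding A_set_def by blast
    qed
  qed
  have AN: "A_set R M N \<subseteq> A_set R M L" if P: "PS_hollow R M (mod_sum M N L)"
  proof
    fix I assume I: "I \<in> A_set R M N"
    then have "mod_sum M N L \<subseteq> mod_sum M (ideal_mult_module R M I) L"
      using mod_sum_mono[of N "ideal_mult_module R M I" L L M] unfolding A_set_def by blast
    moreover have "ideal I R" using I unfolding A_set_def by blast
    ultimately have "mod_sum M N L \<subseteq> ideal_mult_module R M I \<or> mod_sum M N L \<subseteq> L"
      using P sL unfolding PS_hollow_def by (meson subset_refl)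
    then show "I \<in> A_set R M L" using N1 L1 assms(6) \<open>ideal I R\<close> unfolding A_set_def by blast
  qed
  have AL: "A_set R M L \<subseteq> A_set R M N" if P: "PS_hollow R M (mod_sum M N L)"
  proof
    fix I assume I: "I \<in> A_set R M L"
    have "mod_sum M N L \<subseteq> mod_sum M (ideal_mult_module R M I) N"
    proof
      fix x assume "x \<in> mod_sum M N L"
      then obtain n l where x: "x = n \<oplus>\<^bsub>M\<^esub> l" "n \<in> N" "l \<in> L" unfolding mod_sum_def by blast
      have c: "n \<in> carrier M" "l \<in> carrier M" using x module.submoduleE(1)[OF mod sN] module.submoduleE(1)[OF mod sL] by auto
      have "x = l \<oplus>\<^bsub>M\<^esub> n" using x(1) c module.comm_helper[OF mod] by simp
      moreover have "l \<in> ideal_mult_module R M I" using I x(3) unfolding A_set_def by blast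
      ultimately show "x \<in> mod_sum M (ideal_mult_module R M I) N" unfolding mod_sum_def using x(2) by blast
    qed
    moreover have "ideal I R" using I unfolding A_set_def by blast
    ultimately have "mod_sum M N L \<subseteq> ideal_mult_module R M I \<or> mod_sum M N L \<subseteq> N"
      using P sN unfolding PS_hollow_def by (meson subset_refl)
    then show "I \<in> A_set R M N" using N1 L1 assms(7) \<open>ideal I R\<close> unfolding A_set_def by blast
  qed
  show ?thesis
  proof
    assume h: "H_PS_hollow R M H (mod_sum M N L)"
    then have P: "PS_hollow R M (mod_sum M N L)" unfolding H_PS_hollow_def by blast
    have "A_set R M N = A_set R M (mod_sum M N L)" "A_set R M L = A_set R M (mod_sum M N L)"
      using AN[OF P] AL[OF P] Asum by blast+
    then show "H_PS_hollow R M H N \<and> H_PS_hollow R M H L"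
      using h assms(4,5) unfolding H_PS_hollow_def H_set_def by simp
  next
    assume h: "H_PS_hollow R M H N \<and> H_PS_hollow R M H L"
    then have hh: "H_set R M N = H_set R M L" unfolding H_PS_hollow_def by simp
    have eq: "A_set R M N = A_set R M L"
      using A_eq[OF assms(1) hh] A_eq[OF assms(1) hh[symmetric]] by blast
    then have eq2: "A_set R M (mod_sum M N L) = A_set R M N" using Asum by blast
    have "PS_hollow R M (mod_sum M N L)" unfolding PS_hollow_def
    proof (intro conjI sNL allI impI)
      fix I K assume I: "ideal I R" and K: "submodule K R M"
        and sub: "mod_sum M N L \<subseteq> mod_sum M (ideal_mult_module R M I) K"
      have n: "N \<subseteq> ideal_mult_module R M I \<or> N \<subseteq> K"
        using assms(4) I K sub N1 unfolding PS_hollow_def by blast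
      have l: "L \<subseteq> ideal_mult_module R M I \<or> L \<subseteq> K"
        using assms(5) I K sub L1 unfolding PS_hollow_def by blast
      have iff: "N \<subseteq> ideal_mult_module R M I \<longleftrightarrow> L \<subseteq> ideal_mult_module R M I"
        using eq I unfolding A_set_def by blast
      show "mod_sum M N L \<subseteq> ideal_mult_module R M I \<or> mod_sum M N L \<subseteq> K"
      proof (cases "N \<subseteq> ideal_mult_module R M I")
        case True
        have "mod_sum M N L \<subseteq> ideal_mult_module R M I"
          by (rule mod_sum_le) (use True iff IM_add[OF _ _ mod] in auto)
        then show ?thesis by blast
      next
        case False
        have "mod_sum M N L \<subseteq> K"
          by (rule mod_sum_le) (use False iff n l module.submoduleE(5)[OF mod K] in auto)
        then show ?thesis by blast
      qed
    qed
    then show "H_PS_hollow R M H (mod_sum M N L)"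
      using h eq2 unfolding H_PS_hollow_def H_set_def by simp
  qed
qed

end
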